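(* Let $(a_n)_{n\ge0}$ be a sequence of positive real numbers satisfying $\frac{a_{n+1}}{a_n}=\frac{an+b}{cn+d}$ for all $n\ge0$, where $a,b,c,d\ge0$ are real, $c\le d$, $a$ and $b$ are not both zero, and $c$ and $d$ are not both zero. Then for every $n\ge 0$ the polynomial $p_n(x)=\sum_{i=0}^n a_ix^i$ has exactly $n\bmod 2$ real roots counted with multiplicity (no real root if $n$ is even, exactly one if $n$ is odd). *)

theory Defs
  imports "HOL-Computational_Algebra.Polynomial"
begin

end

theory Submission
  imports Defs
begin

lemma dlin: "pderiv [:-r,1:] = (1::real poly)"
  by (simp add: pderiv_pCons)

lemma d1: "poly (pderiv ([:-r,1:]*Q)) (r::real) = poly Q r"
  by (simp only: pderiv_mult dlin poly_mult poly_add) simp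

lemma d2: "poly (pderiv ([:-r,1:]*([:-r,1:]*Q))) (r::real) = 0"
  by (simp only: pderiv_mult dlin poly_mult poly_add) simp

lemma d3: "poly (pderiv (pderiv ([:-r,1:]*([:-r,1:]*Q)))) (r::real) = 2 * poly Q r"
  by (simp only: pderiv_mult dlin poly_mult poly_add pderiv_add pderiv_1) simp

lemma ivt1:
  fixes Q :: "real poly"
  assumes "\<And>x. x > r \<Longrightarrow> poly Q x > 0"
  shows "poly Q r \<ge> 0"
proof (rule ccontr)
  assume "\<not> ?thesis"
  then have "poly Q r < 0" by simp
  moreover have "poly Q (r+1) > 0" using assms by simp
  ultimately obtain x where "r < x" "x < r+1" "poly Q x = 0"
    using poly_IVT_pos[of r "r+1" Q] by auto
  with assms show False by force
qed

lemma ivt2: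
  fixes Q :: "real poly"
  assumes "r < t" "\<And>x. r < x \<Longrightarrow> x < t \<Longrightarrow> poly Q x < 0"
  shows "poly Q r \<le> 0"
proof (rule ccontr)
  assume "\<not> ?thesis"
  then have "poly Q r > 0" by simp
  moreover have "poly Q ((r+t)/2) < 0" using assms by simp
  ultimately obtain x where "r < x" "x < (r+t)/2" "poly Q x = 0"
    using poly_IVT_neg[of r "(r+t)/2" Q] assms by auto
  with assms show False by force
qed

lemma poly_P: "poly (\<Sum>i\<le>n. monom (s i) i) (x::real) = (\<Sum>i\<le>n. s i * x^i)"
  by (simp add: poly_sum poly_monom mult_ac)

lemma poly_dP: "x * poly (pderiv (\<Sum>i\<le>n. monom (s i) i)) x = (\<Sum>i\<le>n. real i * s i * (x::real)^i)"
proof -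
  have "pderiv (\<Sum>i\<le>n. monom (s i) i) = (\<Sum>i\<le>n. pderiv (monom (s i) i))"
    using higher_pderiv_sum[of 1 "\<lambda>i. monom (s i) i" "{..n}"] by simp
  then show ?thesis
    by (auto simp: poly_sum pderiv_monom poly_monom sum_distrib_left intro!: sum.cong)
       (metis Suc_pred mult.assoc mult.left_commute power_Suc)
qed

lemma SI:
  fixes s :: "nat \<Rightarrow> real"
  assumes rec: "\<And>n. s (Suc n) * (c * real n + d) = (a * real n + b) * s n"
  shows "(c - a*x)*(\<Sum>i\<le>n. real i * s i * x^i) + ((d-c) - b*x)*(\<Sum>i\<le>n. s i * x^i)
     = (d-c)*s 0 - (a*real n+b)*s n * x^(Suc n)"
proof (induction n)
  case 0 then show ?case by (simp add: algebra_simps)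
next
  case (Suc n)
  have "(c - a*x)*(\<Sum>i\<le>Suc n. real i * s i * x^i) + ((d-c) - b*x)*(\<Sum>i\<le>Suc n. s i * x^i)
     = ((c - a*x)*(\<Sum>i\<le>n. real i * s i * x^i) + ((d-c) - b*x)*(\<Sum>i\<le>n. s i * x^i))
       + x^Suc n * (s (Suc n) * (c * real n + d)) - (a*real (Suc n)+b)*s (Suc n) * x^(Suc (Suc n))"
    by (simp add: algebra_simps)
  also have "\<dots> = (d-c)*s 0 - (a*real (Suc n)+b)*s (Suc n) * x^(Suc (Suc n))"
    by (simp only: Suc rec) (simp add: algebra_simps)
  finally show ?case .
qed


theorem theorem8p2:
  fixes s :: "nat \<Rightarrow> real" and a b c d :: real
  assumes pos: "\<And>n. s n > 0"
    and rec: "\<And>n. s (Suc n) / s n = (a * real n + b) / (c * real n + d)"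
    and nonneg: "a \<ge> 0" "b \<ge> 0" "c \<ge> 0" "d \<ge> 0"
    and cd: "c \<le> d"
    and ab: "\<not> (a = 0 \<and> b = 0)"
    and cd0: "\<not> (c = 0 \<and> d = 0)"
  shows "size (proots (\<Sum>i\<le>n. monom (s i) i)) = n mod 2"
proof -
  have dpos: "d > 0" using nonneg cd cd0 by linarith
  have den: "c * real m + d > 0" for m using nonneg dpos by (simp add: add_nonneg_pos)
  have rec2: "s (Suc m) * (c * real m + d) = (a * real m + b) * s m" for m
    using rec[of m] pos[of m] den[of m] by (simp add: field_simps)
  have bpos: "b > 0"
  proof -
    have "s 1 * d = b * s 0" using rec2[of 0] by simp
    moreover have "s 1 * d > 0" using pos dpos by simp
    ultimately have "b * s 0 > 0" by simp
    then show ?thesis using pos[of 0] by (simp add: zero_less_mult_iff)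
  qed
  have abn: "(a*real n+b) * s n > 0" using bpos nonneg pos[of n]
    by (simp add: add_nonneg_pos)
  define P where "P = (\<Sum>i\<le>n. monom (s i) i)"
  define Hp where "Hp = [:(d-c)*s 0:] - monom ((a*real n+b)*s n) (Suc n)"
  define H where "H = (\<lambda>x::real. (d-c)*s 0 - (a*real n+b)*s n * x^(Suc n))"
  have PI: "[:c,-a:] * ([:0,1:] * pderiv P) + [:d-c,-b:] * P = Hp"
  proof -
    have "poly ([:c,-a:] * ([:0,1:] * pderiv P) + [:d-c,-b:] * P) x = poly Hp x" for x
    proof -
      have "poly ([:c,-a:] * ([:0,1:] * pderiv P) + [:d-c,-b:] * P) x
          = (c - a*x)*(x*poly (pderiv P) x) + ((d-c)-b*x)*poly P x"
        by (simp add: algebra_simps)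
      also have "\<dots> = (d-c)*s 0 - (a*real n+b)*s n * x^(Suc n)"
        unfolding P_def poly_dP poly_P by (rule SI[OF rec2])
      also have "\<dots> = poly Hp x" by (simp add: Hp_def poly_monom)
      finally show ?thesis .
    qed
    then show ?thesis using poly_eq_poly_eq_iff by blast
  qed
  have key: "r*(c - a*r)*poly (pderiv P) r = H r" if "poly P r = 0" for r
  proof -
    have "poly ([:c,-a:] * ([:0,1:] * pderiv P) + [:d-c,-b:] * P) r = poly Hp r"
      using PI by simp
    then show ?thesis using that by (simp add: Hp_def H_def poly_monom algebra_simps)
  qed
  have key2: "r*(c - a*r)*poly (pderiv (pderiv P)) r = - (real (Suc n) * ((a*real n+b)*s n)) * r^n"
    if "poly P r = 0" "poly (pderiv P) r = 0" for r
  proof -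
    have "poly (pderiv ([:c,-a:] * ([:0,1:] * pderiv P) + [:d-c,-b:] * P)) r = poly (pderiv Hp) r"
      using PI by simp
    then show ?thesis using that
      by (simp add: Hp_def pderiv_mult pderiv_add pderiv_diff pderiv_monom pderiv_pCons pderiv_smult pderiv_minus poly_monom algebra_simps)
  qed
  have Pval: "poly P x = (\<Sum>i\<le>n. s i * x^i)" for x unfolding P_def by (rule poly_P)
  have Ppos: "poly P x > 0" if "x \<ge> 0" for x
  proof -
    have "s 0 * x^0 \<le> (\<Sum>i\<le>n. s i * x^i)"
      by (rule member_le_sum[of 0 "{..n}" "\<lambda>i. s i * x^i"]) (use pos that in \<open>auto intro!: mult_nonneg_nonneg simp: less_imp_le\<close>)
    then show ?thesis using pos[of 0] Pval by simp
  qed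
  have P0: "P \<noteq> 0" using Ppos[of 0] by auto
  have neg: "r < 0" if "poly P r = 0" for r using Ppos[of r] that by force
  have fin: "finite {x. poly P x = 0}" using P0 poly_roots_finite by blast
  have lin: "r*(c-a*r) \<le> 0" if "r < 0" for r
  proof -
    have "a*r \<le> 0" using nonneg that by (simp add: mult_nonneg_nonpos)
    then have "c - a*r \<ge> 0" using nonneg by linarith
    then show ?thesis using that by (simp add: mult_nonpos_nonneg)
  qed
  have Hmono: "H x < H y" if "x < y" "y < 0" "odd n" for x y
  proof -
    have "y^(Suc n) < x^(Suc n)"
    proof -
      have "(-y)^(Suc n) < (-x)^(Suc n)"
        by (rule power_strict_mono) (use that in auto)
      moreover have "even (Suc n)" using that by simp
      ultimately show ?thesis by (simp add: power_minus_even)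
    qed
    then show ?thesis unfolding H_def using abn mult_strict_left_mono by (simp del: power_Suc)
  qed
  have dvd_lin: "\<exists>Q. P = [:-r,1:] * Q" if "poly P r = 0" for r
    using that by (metis dvdE poly_eq_0_iff_dvd)
  have largest: "(\<forall>x>r. poly P x > 0) \<and> poly (pderiv P) r \<ge> 0 \<and> H r \<le> 0"
    if r0: "poly P r = 0" and rmax: "\<And>y. poly P y = 0 \<Longrightarrow> y \<le> r" for r
  proof -
    have above: "poly P x > 0" if "x > r" for x
    proof (rule ccontr)
      assume "\<not> poly P x > 0"
      moreover have "poly P x \<noteq> 0" using rmax that by force
      ultimately have "poly P x < 0" by simp
      moreover have "x < 0" using Ppos[of x] \<open>poly P x < 0\<close> by linarith
      ultimately obtain y where "x < y" "y < 0" "poly P y = 0"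
        using poly_IVT_pos[of x 0 P] Ppos[of 0] by auto
      with rmax that show False by force
    qed
    obtain Q where Q: "P = [:-r,1:] * Q" using dvd_lin r0 by blast
    have "poly Q x > 0" if "x > r" for x
    proof -
      have "poly P x = (x - r) * poly Q x" by (simp add: Q algebra_simps)
      then show ?thesis using above[OF that] that by (simp add: zero_less_mult_iff)
    qed
    then have "poly Q r \<ge> 0" by (rule ivt1)
    then have d: "poly (pderiv P) r \<ge> 0" unfolding Q d1 .
    have "H r \<le> 0" using key[OF r0] lin[OF neg[OF r0]] d
      by (metis mult_nonpos_nonneg)
    then show ?thesis using above d by blast
  qed
  define R where "R = {x. poly P x = 0}"
  have finR: "finite R" using fin R_def by simp
  show ?thesis
  proof (cases "even n")
    case True
    have "R = {}"
    proof (rule ccontr)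
      assume "R \<noteq> {}"
      define r where "r = Max R"
      have rR: "poly P r = 0" using Max_in[OF finR \<open>R \<noteq> {}\<close>] r_def R_def by simp
      have "y \<le> r" if "poly P y = 0" for y using Max_ge[OF finR] that r_def R_def by simp
      then have "H r \<le> 0" using largest[OF rR] by blast
      moreover have "H r > 0"
      proof -
        have "r^(Suc n) < 0" using neg[OF rR] True by (simp add: power_less_zero_eq del: power_Suc)
        then have "(a*real n+b)*s n * r^(Suc n) < 0" using abn by (simp add: mult_pos_neg del: power_Suc)
        moreover have "(d-c)*s 0 \<ge> 0" using cd pos[of 0] by simp
        ultimately show ?thesis unfolding H_def by linarith
      qed
      ultimately show False by simp
    qed
    then have "proots P = {#}"
      by (intro multiset_eqI) (simp add: P0 R_def order_0I)
    then show ?thesis using True P_def by simp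
  next
    case False
    then obtain m where nm: "n = Suc m" by (cases n) auto
    define S where "S = (\<Sum>i\<le>m. s i)"
    define M where "M = 1 + S / s n"
    have S0: "S \<ge> 0" unfolding S_def using pos by (simp add: sum_nonneg less_imp_le)
    have M1: "M \<ge> 1" using S0 pos[of n] by (simp add: M_def)
    have "poly P (-M) < 0"
    proof -
      have "poly P (-M) = (\<Sum>i\<le>m. s i * (-M)^i) + s n * (-M)^n"
        using Pval[of "-M"] nm by simp
      also have "(\<Sum>i\<le>m. s i * (-M)^i) \<le> (\<Sum>i\<le>m. s i * M^m)"
      proof (rule sum_mono)
        fix i assume "i \<in> {..m}"
        then have im: "i \<le> m" by simp
        have "(-M)^i \<le> \<bar>(-M)^i\<bar>" by (rule abs_ge_self)
        also have "\<bar>(-M)^i\<bar> = M^i" using M1 by (simp add: power_abs)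
        also have "\<dots> \<le> M^m" using M1 im by (simp add: power_increasing)
        finally show "s i * (-M)^i \<le> s i * M^m" using pos[of i] by simp
      qed
      also have "(\<Sum>i\<le>m. s i * M^m) = S * M^m" by (simp add: S_def sum_distrib_right)
      also have "s n * (-M)^n = - ((s n + S) * M^m)"
      proof -
        have "(-M)^n = - (M * M^m)" using nm False by (simp add: power_minus_odd)
        then have "s n * (-M)^n = - ((s n * M) * M^m)" by (simp add: mult.assoc)
        moreover have "s n * M = s n + S" using pos[of n] by (simp add: M_def field_simps)
        ultimately show ?thesis by simp
      qed
      finally have "poly P (-M) \<le> S * M^m - (s n + S) * M^m" by simp
      also have "\<dots> = - (s n * M^m)" by (simp add: algebra_simps)
      also have "\<dots> < 0" using pos[of n] M1 by simp
      finally show ?thesis .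
    qed
    then obtain x0 where "poly P x0 = 0"
      using poly_IVT_pos[of "-M" 0 P] Ppos[of 0] M1 by auto
    then have Rne: "R \<noteq> {}" unfolding R_def by auto
    define r where "r = Max R"
    have rR: "poly P r = 0" using Max_in[OF finR Rne] r_def R_def by simp
    have rmax: "y \<le> r" if "poly P y = 0" for y using Max_ge[OF finR] that r_def R_def by simp
    have above: "\<And>x. x > r \<Longrightarrow> poly P x > 0" and dr: "poly (pderiv P) r \<ge> 0" and Hr: "H r \<le> 0"
      using largest[OF rR rmax] by blast+
    have rn: "r < 0" using neg[OF rR] .
    have nosq: "\<not> [:-r,1:]^2 dvd P"
    proof
      assume "[:-r,1:]^2 dvd P"
      then obtain Q where "P = [:-r,1:]^2 * Q" by (elim dvdE)
      then have Q: "P = [:-r,1:] * ([:-r,1:] * Q)" by (simp only: power2_eq_square mult.assoc)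
      have "poly Q x > 0" if "x > r" for x
      proof -
        have "poly P x = (x - r)^2 * poly Q x" by (simp add: Q algebra_simps power2_eq_square)
        then show ?thesis using above[OF that] that by (simp add: zero_less_mult_iff)
      qed
      then have Qr: "poly Q r \<ge> 0" by (rule ivt1)
      have "poly (pderiv P) r = 0" unfolding Q d2 ..
      then have "r*(c - a*r)*poly (pderiv (pderiv P)) r = - (real (Suc n) * ((a*real n+b)*s n)) * r^n"
        using key2 rR by blast
      moreover have "r*(c - a*r)*poly (pderiv (pderiv P)) r \<le> 0"
        using lin[OF rn] Qr unfolding Q d3 by (simp add: mult_nonpos_nonneg)
      moreover have "r^n < 0" using rn False by (simp add: power_less_zero_eq)
      then have "(real (Suc n) * ((a*real n+b)*s n)) * r^n < 0"
        using abn by (simp add: mult_pos_neg del: of_nat_Suc)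
      ultimately show False by (smt (verit) mult_minus_left)
    qed
    have dpos': "poly (pderiv P) r > 0"
    proof -
      have "poly (pderiv P) r \<noteq> 0"
      proof
        assume z: "poly (pderiv P) r = 0"
        obtain Q where Q: "P = [:-r,1:] * Q" using dvd_lin rR by blast
        have "poly Q r = 0" using z unfolding Q d1 .
        then obtain Q2 where "Q = [:-r,1:] * Q2" using poly_eq_0_iff_dvd by (metis dvdE)
        then have "P = [:-r,1:]^2 * Q2" using Q by (simp only: power2_eq_square mult.assoc)
        then have "[:-r,1:]^2 dvd P" by (rule dvdI)
        with nosq show False ..
      qed
      then show ?thesis using dr by simp
    qed
    have Runi: "R = {r}"
    proof (rule ccontr)
      assume "R \<noteq> {r}"
      then obtain y where "poly P y = 0" "y \<noteq> r" using rR R_def by auto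
      then have "y < r" using rmax by force
      define R2 where "R2 = {x\<in>R. x < r}"
      have fin2: "finite R2" using finR R2_def by simp
      have R2ne: "R2 \<noteq> {}" using \<open>y < r\<close> \<open>poly P y = 0\<close> R2_def R_def by auto
      define r3 where "r3 = Max R2"
      have r3R: "poly P r3 = 0" "r3 < r" using Max_in[OF fin2 R2ne] r3_def R2_def R_def by auto
      have r3max: "x \<le> r3" if "poly P x = 0" "x < r" for x
        using Max_ge[OF fin2] that r3_def R2_def R_def by simp
      have between: "poly P x < 0" if bx: "r3 < x" "x < r" for x
      proof (rule ccontr)
        assume "\<not> poly P x < 0"
        moreover have "poly P x \<noteq> 0" using r3max that by force
        ultimately have px: "poly P x > 0" by simp
        obtain Q where Q: "P = [:-r,1:] * Q" using dvd_lin rR by blast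
        have Qr: "poly Q r > 0" using dpos' unfolding Q d1 .
        have "poly P x = (x - r) * poly Q x" by (simp add: Q algebra_simps)
        then have "poly Q x < 0" using px that by (simp add: zero_less_mult_iff)
        then obtain z where z: "x < z" "z < r" "poly Q z = 0" using poly_IVT_pos[of x r Q] Qr bx by auto
        then have "poly P z = 0" by (simp add: Q)
        then have "z \<le> r3" using r3max z by simp
        with z bx show False by simp
      qed
      obtain Q3 where Q3: "P = [:-r3,1:] * Q3" using dvd_lin r3R by blast
      have "poly Q3 x < 0" if "r3 < x" "x < r" for x
      proof -
        have "poly P x = (x - r3) * poly Q3 x" by (simp add: Q3 algebra_simps)
        then show ?thesis using between[OF that] that by (simp add: mult_less_0_iff)
      qed
      then have "poly Q3 r3 \<le> 0" using ivt2 r3R(2) by blast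
      then have d3': "poly (pderiv P) r3 \<le> 0" unfolding Q3 d1 .
      have "H r3 \<ge> 0" using key[OF r3R(1)] lin[OF neg[OF r3R(1)]] d3'
        by (metis mult_nonpos_nonpos)
      moreover have "H r3 < H r" using Hmono[OF r3R(2) rn False] .
      ultimately show False using Hr by linarith
    qed
    have ord: "order r P = 1"
    proof (rule order_unique_lemma)
      show "[:- r, 1:] ^ 1 dvd P" using rR by (simp add: poly_eq_0_iff_dvd)
      show "\<not> [:- r, 1:] ^ Suc 1 dvd P" using nosq by (simp only: Suc_1 not_False_eq_True)
    qed
    have "proots P = {#r#}"
    proof (intro multiset_eqI)
      fix x show "count (proots P) x = count {#r#} x"
      proof (cases "x = r")
        case True then show ?thesis using ord P0 by simp
      next
        case False
        then have "poly P x \<noteq> 0" using Runi R_def by blast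
        then show ?thesis using False P0 by (simp add: order_0I)
      qed
    qed
    then show ?thesis using False P_def by (simp add: odd_iff_mod_2_eq_one)
  qed
qed

end
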